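(* If $G$ is a connected cubic bipartite graph of order at most $12$, then $\gamma_{\rm i}(G)=\frac{n(G)}{2}=\alpha(G)$.
   Context: $n(G)$ is the number of vertices and $\alpha(G)$ the independence number. Indicated domination game on $G$: two players, Dominator and Staller, alternate. In each round Dominator indicates a vertex $v$ not yet dominated by the vertices previously selected by Staller (a vertex dominates itself and its neighbors), and Staller must select a vertex of the closed neighborhood $N[v]$, adding it to a set $D$. The game ends when $D$ is a dominating set of $G$. Dominator wants to minimize $|D|$ and Staller to maximize it; the size of $D$ under optimal play of both is the indicated domination number $\gamma_{\rm i}(G)$. *)

theory Defs
  imports Complex_Main
begin

definition simple_graph :: "'a set \<Rightarrow> ('a \<Rightarrow> 'a \<Rightarrow> bool) \<Rightarrow> bool" where
  "simple_graph V E \<longleftrightarrow> finite V \<and> (\<forall>x y. E x y \<longrightarrow> x \<in> V \<and> y \<in> V)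
     \<and> (\<forall>x y. E x y \<longrightarrow> E y x) \<and> (\<forall>x. \<not> E x x)"

definition closed_nbhd :: "('a \<Rightarrow> 'a \<Rightarrow> bool) \<Rightarrow> 'a \<Rightarrow> 'a set" where
  "closed_nbhd E v = insert v {u. E v u}"

definition cubic :: "'a set \<Rightarrow> ('a \<Rightarrow> 'a \<Rightarrow> bool) \<Rightarrow> bool" where
  "cubic V E \<longleftrightarrow> (\<forall>v\<in>V. card {u. E v u} = 3)"

definition connected_graph :: "'a set \<Rightarrow> ('a \<Rightarrow> 'a \<Rightarrow> bool) \<Rightarrow> bool" where
  "connected_graph V E \<longleftrightarrow> V \<noteq> {} \<and> (\<forall>x\<in>V. \<forall>y\<in>V. E\<^sup>*\<^sup>* x y)"

definition bipartite :: "'a set \<Rightarrow> ('a \<Rightarrow> 'a \<Rightarrow> bool) \<Rightarrow> bool" where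
  "bipartite V E \<longleftrightarrow> (\<exists>A B. A \<union> B = V \<and> A \<inter> B = {} \<and>
      (\<forall>x y. E x y \<longrightarrow> (x \<in> A \<and> y \<in> B) \<or> (x \<in> B \<and> y \<in> A)))"

definition independent_set :: "'a set \<Rightarrow> ('a \<Rightarrow> 'a \<Rightarrow> bool) \<Rightarrow> 'a set \<Rightarrow> bool" where
  "independent_set V E S \<longleftrightarrow> S \<subseteq> V \<and> (\<forall>x\<in>S. \<forall>y\<in>S. \<not> E x y)"

definition independence_number :: "'a set \<Rightarrow> ('a \<Rightarrow> 'a \<Rightarrow> bool) \<Rightarrow> nat" where
  "independence_number V E = Max (card ` {S. independent_set V E S})"

definition dominated :: "('a \<Rightarrow> 'a \<Rightarrow> bool) \<Rightarrow> 'a set \<Rightarrow> 'a \<Rightarrow> bool" where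
  "dominated E D x \<longleftrightarrow> x \<in> D \<or> (\<exists>y\<in>D. E y x)"

definition dominating :: "'a set \<Rightarrow> ('a \<Rightarrow> 'a \<Rightarrow> bool) \<Rightarrow> 'a set \<Rightarrow> bool" where
  "dominating V E D \<longleftrightarrow> (\<forall>x\<in>V. dominated E D x)"

text \<open>Indicated domination game: from a position D (the vertices selected so far by
  Staller), Dominator can guarantee that the game ends with at most k further
  selections.  Each round Dominator indicates an undominated vertex v and Staller
  selects any vertex of N[v].\<close>
primrec dom_can_force :: "'a set \<Rightarrow> ('a \<Rightarrow> 'a \<Rightarrow> bool) \<Rightarrow> nat \<Rightarrow> 'a set \<Rightarrow> bool" where
  "dom_can_force V E 0 D \<longleftrightarrow> dominating V E D"
| "dom_can_force V E (Suc k) D \<longleftrightarrow> dominating V E D \<or>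
     (\<exists>v\<in>V. \<not> dominated E D v \<and>
        (\<forall>u\<in>closed_nbhd E v. dom_can_force V E k (insert u D)))"

definition indicated_domination_number :: "'a set \<Rightarrow> ('a \<Rightarrow> 'a \<Rightarrow> bool) \<Rightarrow> nat" where
  "indicated_domination_number V E = (LEAST k. dom_can_force V E k {})"

end

theory Submission
  imports Defs
begin

lemma count_le:
  assumes sg: "simple_graph V E" and cub: "cubic V E"
    and XV: "X \<subseteq> V" and YV: "Y \<subseteq> V"
    and nb: "\<And>x y. x \<in> X \<Longrightarrow> E x y \<Longrightarrow> y \<in> Y"
  shows "card X \<le> card Y"
proof -
  have fin: "finite V" using sg by (simp add: simple_graph_def)
  have fX: "finite X" using XV fin finite_subset by blast
  have fY: "finite Y" using YV fin finite_subset by blast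
  have sym: "\<And>x y. E x y \<Longrightarrow> E y x" using sg by (simp add: simple_graph_def)
  have "3 * card X = (\<Sum>x\<in>X. card {y. E x y})"
    using cub XV by (simp add: cubic_def subset_iff)
  also have "\<dots> = (\<Sum>x\<in>X. card {y\<in>Y. E x y})"
    by (rule sum.cong) (auto intro!: arg_cong[where f=card] dest: nb)
  also have "\<dots> = (\<Sum>x\<in>X. \<Sum>y\<in>{y\<in>Y. E x y}. (1::nat))" by simp
  also have "\<dots> = (\<Sum>y\<in>Y. \<Sum>x\<in>{x\<in>X. E x y}. (1::nat))"
    by (rule sum.swap_restrict[OF fX fY])
  also have "\<dots> = (\<Sum>y\<in>Y. card {x\<in>X. E x y})" by simp
  also have "\<dots> \<le> (\<Sum>y\<in>Y. card {x. E y x})"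
  proof (rule sum_mono)
    fix y assume "y \<in> Y"
    have "finite {x. E y x}" using sg fin
      by (metis (no_types, lifting) finite_subset mem_Collect_eq simple_graph_def subsetI)
    moreover have "{x\<in>X. E x y} \<subseteq> {x. E y x}" using sym by auto
    ultimately show "card {x\<in>X. E x y} \<le> card {x. E y x}" by (rule card_mono)
  qed
  also have "\<dots> = 3 * card Y"
    using cub YV by (simp add: cubic_def subset_iff)
  finally show ?thesis by simp
qed

lemma dominated_mono: "dominated E D x \<Longrightarrow> dominated E (insert u D) x"
  by (auto simp: dominated_def)

lemma phase2:
  assumes sg: "simple_graph V E"
  shows "card {x\<in>V. \<not> dominated E D x} \<le> k \<Longrightarrow> dom_can_force V E k D"
proof (induction k arbitrary: D)
  have fin: "finite V" using sg by (simp add: simple_graph_def)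
  case 0
  then have "{x\<in>V. \<not> dominated E D x} = {}" using fin by simp
  then show ?case by (auto simp: dominating_def)
next
  have fin: "finite V" using sg by (simp add: simple_graph_def)
  case (Suc k)
  show ?case
  proof (cases "dominating V E D")
    case True then show ?thesis by simp
  next
    case False
    then obtain v where v: "v \<in> V" "\<not> dominated E D v" by (auto simp: dominating_def)
    have "\<forall>u\<in>closed_nbhd E v. dom_can_force V E k (insert u D)"
    proof
      fix u assume u: "u \<in> closed_nbhd E v"
      have dv: "dominated E (insert u D) v"
        using u sg by (auto simp: closed_nbhd_def dominated_def simple_graph_def)
      have sub0: "{x\<in>V. \<not> dominated E (insert u D) x} \<subseteq> {x\<in>V. \<not> dominated E D x}"
        by (auto simp: dominated_def)
      have sub: "{x\<in>V. \<not> dominated E (insert u D) x} \<subset> {x\<in>V. \<not> dominated E D x}"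
        using sub0 dv v by (metis (mono_tags, lifting) mem_Collect_eq psubsetI)
      have "card {x\<in>V. \<not> dominated E (insert u D) x} < card {x\<in>V. \<not> dominated E D x}"
        using fin by (intro psubset_card_mono[OF _ sub]) simp
      then show "dom_can_force V E k (insert u D)" using Suc by simp
    qed
    then show ?thesis using v by auto
  qed
qed

lemma lower:
  assumes sg: "simple_graph V E" and cub: "cubic V E"
    and AB: "A \<union> B = V" "A \<inter> B = {}"
    and bip: "\<forall>x y. E x y \<longrightarrow> (x \<in> A \<and> y \<in> B) \<or> (x \<in> B \<and> y \<in> A)"
  shows "D \<subseteq> A \<Longrightarrow> dom_can_force V E k D \<Longrightarrow> card (A - D) \<le> k"
proof -
  have b1: "\<And>x y. E x y \<Longrightarrow> x \<in> A \<Longrightarrow> y \<notin> A"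
  proof -
    fix x y assume "E x y" "x \<in> A"
    then have "(x \<in> A \<and> y \<in> B) \<or> (x \<in> B \<and> y \<in> A)" using bip by blast
    then show "y \<notin> A" using AB(2) \<open>x \<in> A\<close> by blast
  qed
  have b2: "\<And>x y. E x y \<Longrightarrow> x \<notin> A \<Longrightarrow> y \<in> A"
  proof -
    fix x y assume "E x y" "x \<notin> A"
    then have "(x \<in> A \<and> y \<in> B) \<or> (x \<in> B \<and> y \<in> A)" using bip by blast
    then show "y \<in> A" using \<open>x \<notin> A\<close> by blast
  qed
  show "D \<subseteq> A \<Longrightarrow> dom_can_force V E k D \<Longrightarrow> card (A - D) \<le> k"
proof (induction k arbitrary: D)
  case 0
  have "A \<subseteq> D"
  proof
    fix a assume a: "a \<in> A"
    then have "dominated E D a" using 0 AB by (auto simp: dominating_def)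
    then show "a \<in> D" unfolding dominated_def
    proof
      assume "\<exists>y\<in>D. E y a"
      then obtain y where "y \<in> D" "E y a" by blast
      then have "y \<in> A" using 0 by blast
      then show "a \<in> D" using b1 \<open>E y a\<close> a by blast
    qed
  qed
  then have "A - D = {}" by blast
  then show ?case by (metis card.empty order_refl)
next
  case (Suc k)
  have fin: "finite V" using sg by (simp add: simple_graph_def)
  show ?case
  proof (cases "dominating V E D")
    case True
    have "A \<subseteq> D"
    proof
      fix a assume a: "a \<in> A"
      then have "dominated E D a" using True AB by (auto simp: dominating_def)
      then show "a \<in> D" unfolding dominated_def
      proof
        assume "\<exists>y\<in>D. E y a"
        then obtain y where "y \<in> D" "E y a" by blast
        then have "y \<in> A" using Suc.prems by blast
        then show "a \<in> D" using b1 \<open>E y a\<close> a by blast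
      qed
    qed
    then have "A - D = {}" by blast
    then show ?thesis by (metis card.empty zero_le)
  next
    case False
    then obtain v where v: "v \<in> V" "\<not> dominated E D v"
      and all: "\<forall>u\<in>closed_nbhd E v. dom_can_force V E k (insert u D)"
      using Suc.prems by auto
    obtain u where u: "u \<in> closed_nbhd E v" "u \<in> A"
    proof (cases "v \<in> A")
      case True then show ?thesis by (intro that[of v]) (auto simp: closed_nbhd_def)
    next
      case False
      have "card {u. E v u} = 3" using cub v by (simp add: cubic_def)
      then have "{u. E v u} \<noteq> {}" by (metis card.empty zero_neq_numeral)
      then obtain u where "E v u" by auto
      then have "u \<in> A" using b2 False by blast
      then show ?thesis using \<open>E v u\<close> by (intro that[of u]) (auto simp: closed_nbhd_def)
    qed
    have sym: "\<And>x y. E x y \<Longrightarrow> E y x" using sg by (simp add: simple_graph_def)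
    have uD: "u \<notin> D" using u v sym unfolding closed_nbhd_def dominated_def by blast
    have "dom_can_force V E k (insert u D)" using all u(1) by blast
    moreover have "insert u D \<subseteq> A" using u(2) Suc.prems(1) by blast
    ultimately have "card (A - insert u D) \<le> k" using Suc.IH[of "insert u D"] by blast
    moreover have "A - insert u D = (A - D) - {u}" by auto
    moreover have "finite A" using fin AB by auto
    moreover have "u \<in> A - D" using u uD by simp
    ultimately have "card (A - D) = Suc (card (A - insert u D))"
      using card_Suc_Diff1[of "A - D" u] by simp
    then show ?thesis using \<open>card (A - insert u D) \<le> k\<close> by simp
  qed
qed
qed


lemma indep_insert:
  assumes sg: "simple_graph V E" and ind: "independent_set V E D"
    and uV: "u \<in> V" and und: "\<not> dominated E D u"
  shows "independent_set V E (insert u D)"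
proof -
  have sym: "\<And>x y. E x y \<Longrightarrow> E y x" and irr: "\<And>x. \<not> E x x"
    using sg by (simp_all add: simple_graph_def)
  have "\<And>y. y \<in> D \<Longrightarrow> \<not> E y u" using und by (auto simp: dominated_def)
  then have "\<And>y. y \<in> D \<Longrightarrow> \<not> E u y" using sym by blast
  then show ?thesis using ind uV irr \<open>\<And>y. y \<in> D \<Longrightarrow> \<not> E y u\<close>
    unfolding independent_set_def by blast
qed

lemma phase1:
  assumes sg: "simple_graph V E" and cub: "cubic V E"
    and AB: "A \<union> B = V" "A \<inter> B = {}"
    and bip: "\<forall>x y. E x y \<longrightarrow> (x \<in> A \<and> y \<in> B) \<or> (x \<in> B \<and> y \<in> A)"
    and Vne: "V \<noteq> {}" and cA: "card A = m" and cB: "card B = m" and m6: "m \<le> 6"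
    and alpha: "\<And>S. independent_set V E S \<Longrightarrow> card S \<le> m"
  shows "independent_set V E D \<Longrightarrow> m \<le> card D + k \<Longrightarrow> dom_can_force V E k D"
proof -
  have fin: "finite V" using sg by (simp add: simple_graph_def)
  have sym: "\<And>x y. E x y \<Longrightarrow> E y x" using sg by (simp add: simple_graph_def)
  have inV: "\<And>x y. E x y \<Longrightarrow> x \<in> V \<and> y \<in> V" using sg by (simp add: simple_graph_def)
  have b1: "\<And>x y. E x y \<Longrightarrow> x \<in> A \<Longrightarrow> y \<in> B"
  proof -
    fix x y assume "E x y" "x \<in> A"
    then have "(x \<in> A \<and> y \<in> B) \<or> (x \<in> B \<and> y \<in> A)" using bip by blast
    then show "y \<in> B" using AB(2) \<open>x \<in> A\<close> by blast
  qed
  have b2: "\<And>x y. E x y \<Longrightarrow> x \<in> B \<Longrightarrow> y \<in> A"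
  proof -
    fix x y assume "E x y" "x \<in> B"
    then have "(x \<in> A \<and> y \<in> B) \<or> (x \<in> B \<and> y \<in> A)" using bip by blast
    then show "y \<in> A" using AB(2) \<open>x \<in> B\<close> by blast
  qed
  have finA: "finite A" and finB: "finite B" using fin AB(1) by auto
  have cV: "card V = 2 * m" using AB cA cB finA finB card_Un_disjoint[of A B] by simp
  have nbcard: "\<And>v. v \<in> V \<Longrightarrow> card {u. E v u} = 3" using cub by (simp add: cubic_def)
  have nbfin: "\<And>v. finite {u. E v u}"
    using fin inV by (metis (no_types, lifting) finite_subset mem_Collect_eq subsetI)
  have key: "card {x\<in>V. \<not> dominated E D x} + card D \<le> m"
    if ind: "independent_set V E D"
      and nov: "\<not> (\<exists>v\<in>V. \<forall>x\<in>closed_nbhd E v. \<not> dominated E D x)" for D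
  proof -
    define W where "W = {x\<in>V. \<not> dominated E D x}"
    define X where "X = {x\<in>V. dominated E D x} - D"
    have DV: "D \<subseteq> V" using ind by (simp add: independent_set_def)
    have Dind: "\<And>x y. x \<in> D \<Longrightarrow> y \<in> D \<Longrightarrow> \<not> E x y" using ind by (simp add: independent_set_def)
    have finD: "finite D" and finX: "finite X" and finW: "finite W"
      using DV fin finite_subset unfolding X_def W_def by auto
    have Vsplit: "V = D \<union> X \<union> W" using DV unfolding X_def W_def by (auto simp: dominated_def)
    have "card V = card D + card X + card W"
    proof -
      have d1: "D \<inter> X = {}" unfolding X_def by blast
      have d2: "(D \<union> X) \<inter> W = {}" unfolding X_def W_def by (auto simp: dominated_def)
      have "card (D \<union> X \<union> W) = card (D \<union> X) + card W"
        using d2 finD finX finW by (simp add: card_Un_disjoint)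
      also have "card (D \<union> X) = card D + card X"
        using d1 finD finX by (simp add: card_Un_disjoint)
      finally show ?thesis using Vsplit by simp
    qed
    moreover have "m \<le> card X"
    proof -
      have Dne: "D \<noteq> {}"
      proof
        assume "D = {}"
        obtain x where "x \<in> V" using Vne by blast
        then show False using nov \<open>D = {}\<close> by (auto simp: dominated_def)
      qed
      have NX: "{y. E a y} \<subseteq> X" if "a \<in> D" for a
      proof
        fix y assume "y \<in> {y. E a y}"
        then have "E a y" by simp
        then show "y \<in> X" unfolding X_def using inV Dind that by (auto simp: dominated_def)
      qed
      show ?thesis
      proof (cases "(\<exists>a\<in>D. a \<in> A) \<and> (\<exists>b\<in>D. b \<in> B)")
        case True
        then obtain a b where ab: "a \<in> D" "a \<in> A" "b \<in> D" "b \<in> B" by blast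
        have disj: "{y. E a y} \<inter> {y. E b y} = {}" using b1 b2 ab AB(2) by blast
        have "card ({y. E a y} \<union> {y. E b y}) = 6"
        proof -
          have "a \<in> V" "b \<in> V" using ab DV by auto
          then show ?thesis using card_Un_disjoint[OF nbfin nbfin disj] nbcard[of a] nbcard[of b] by simp
        qed
        moreover have "card ({y. E a y} \<union> {y. E b y}) \<le> card X"
          using NX ab finX by (intro card_mono) auto
        ultimately show ?thesis using m6 by simp
      next
        case False
        then consider "D \<inter> A = {}" | "D \<inter> B = {}" by blast
        then show ?thesis
        proof cases
          case 1
          have "A \<subseteq> X"
          proof
            fix y assume yA: "y \<in> A"
            have yV: "y \<in> V" using yA AB by blast
            have yD: "y \<notin> D" using yA 1 by blast
            have "dominated E D y"
            proof (rule ccontr)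
              assume nd: "\<not> dominated E D y"
              from nov yV obtain x where x: "x \<in> closed_nbhd E y" "dominated E D x" by blast
              have "x \<noteq> y" using x nd by blast
              then have Eyx: "E y x" using x by (simp add: closed_nbhd_def)
              then have xB: "x \<in> B" using b1 yA by blast
              show False using x(2) unfolding dominated_def
              proof
                assume "x \<in> D"
                then show False using nd sym Eyx by (auto simp: dominated_def)
              next
                assume "\<exists>d\<in>D. E d x"
                then obtain d where d: "d \<in> D" "E d x" by blast
                then have "d \<in> B" using 1 DV AB by blast
                then have "x \<in> A" using b2 d by blast
                then show False using xB AB(2) by blast
              qed
            qed
            then show "y \<in> X" unfolding X_def using yV yD by blast
          qed
          then show ?thesis using cA finX card_mono by metis
        next
          case 2
          have "B \<subseteq> X"
          proof
            fix y assume yB: "y \<in> B"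
            have yV: "y \<in> V" using yB AB by blast
            have yD: "y \<notin> D" using yB 2 by blast
            have "dominated E D y"
            proof (rule ccontr)
              assume nd: "\<not> dominated E D y"
              from nov yV obtain x where x: "x \<in> closed_nbhd E y" "dominated E D x" by blast
              have "x \<noteq> y" using x nd by blast
              then have Eyx: "E y x" using x by (simp add: closed_nbhd_def)
              then have xA: "x \<in> A" using b2 yB by blast
              show False using x(2) unfolding dominated_def
              proof
                assume "x \<in> D"
                then show False using nd sym Eyx by (auto simp: dominated_def)
              next
                assume "\<exists>d\<in>D. E d x"
                then obtain d where d: "d \<in> D" "E d x" by blast
                then have "d \<in> A" using 2 DV AB by blast
                then have "x \<in> B" using b1 d by blast
                then show False using xA AB(2) by blast
              qed
            qed
            then show "y \<in> X" unfolding X_def using yV yD by blast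
          qed
          then show ?thesis using cB finX card_mono by metis
        qed
      qed
    qed
    ultimately show ?thesis unfolding W_def using cV by linarith
  qed
  show "independent_set V E D \<Longrightarrow> m \<le> card D + k \<Longrightarrow> dom_can_force V E k D"
  proof (induction k arbitrary: D)
    case 0
    show ?case
    proof (cases "\<exists>v\<in>V. \<forall>x\<in>closed_nbhd E v. \<not> dominated E D x")
      case True
      then obtain v where v: "v \<in> V" "\<not> dominated E D v"
        by (auto simp: closed_nbhd_def)
      have "independent_set V E (insert v D)" using indep_insert[OF sg 0(1) v] .
      then have "card (insert v D) \<le> m" by (rule alpha)
      moreover have "v \<notin> D" using v by (auto simp: dominated_def)
      moreover have "finite D" using 0(1) fin finite_subset by (auto simp: independent_set_def)
      ultimately show ?thesis using 0(2) by simp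
    next
      case False
      have "card {x\<in>V. \<not> dominated E D x} \<le> 0" using key[OF 0(1) False] 0(2) by simp
      then show ?thesis using phase2[OF sg] by blast
    qed
  next
    case (Suc k)
    show ?case
    proof (cases "\<exists>v\<in>V. \<forall>x\<in>closed_nbhd E v. \<not> dominated E D x")
      case True
      then obtain v where v: "v \<in> V" and allu: "\<forall>x\<in>closed_nbhd E v. \<not> dominated E D x"
        by blast
      have vnd: "\<not> dominated E D v" using allu by (simp add: closed_nbhd_def)
      have finD: "finite D" using Suc.prems(1) fin finite_subset by (auto simp: independent_set_def)
      have "\<forall>u\<in>closed_nbhd E v. dom_can_force V E k (insert u D)"
      proof
        fix u assume u: "u \<in> closed_nbhd E v"
        have und: "\<not> dominated E D u" using allu u by blast
        have uV: "u \<in> V" using u v inV by (auto simp: closed_nbhd_def)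
        have ind': "independent_set V E (insert u D)" using indep_insert[OF sg Suc.prems(1) uV und] .
        have "u \<notin> D" using und by (auto simp: dominated_def)
        then have "card (insert u D) = Suc (card D)" using finD by simp
        then have "m \<le> card (insert u D) + k" using Suc.prems(2) by simp
        then show "dom_can_force V E k (insert u D)" using Suc.IH ind' by blast
      qed
      then show ?thesis using v vnd by auto
    next
      case False
      have "card {x\<in>V. \<not> dominated E D x} \<le> Suc k" using key[OF Suc.prems(1) False] Suc.prems(2) by simp
      then show ?thesis using phase2[OF sg] by blast
    qed
  qed
qed


theorem proposition5p5:
  fixes V :: "'a set" and E :: "'a \<Rightarrow> 'a \<Rightarrow> bool"
  assumes "simple_graph V E"
    and "connected_graph V E"
    and "cubic V E"
    and "bipartite V E"
    and "card V \<le> 12"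
  shows "real (indicated_domination_number V E) = real (card V) / 2
       \<and> real (card V) / 2 = real (independence_number V E)"
proof -
  note sg = assms(1) and cub = assms(3)
  obtain A B where AB: "A \<union> B = V" "A \<inter> B = {}"
    and bip: "\<forall>x y. E x y \<longrightarrow> (x \<in> A \<and> y \<in> B) \<or> (x \<in> B \<and> y \<in> A)"
    using assms(4) unfolding bipartite_def by blast
  have fin: "finite V" using sg by (simp add: simple_graph_def)
  have Vne: "V \<noteq> {}" using assms(2) by (simp add: connected_graph_def)
  have b1: "\<And>x y. E x y \<Longrightarrow> x \<in> A \<Longrightarrow> y \<in> B"
  proof -
    fix x y assume "E x y" "x \<in> A"
    then have "(x \<in> A \<and> y \<in> B) \<or> (x \<in> B \<and> y \<in> A)" using bip by blast
    then show "y \<in> B" using AB(2) \<open>x \<in> A\<close> by blast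
  qed
  have b2: "\<And>x y. E x y \<Longrightarrow> x \<in> B \<Longrightarrow> y \<in> A"
  proof -
    fix x y assume "E x y" "x \<in> B"
    then have "(x \<in> A \<and> y \<in> B) \<or> (x \<in> B \<and> y \<in> A)" using bip by blast
    then show "y \<in> A" using AB(2) \<open>x \<in> B\<close> by blast
  qed
  have AV: "A \<subseteq> V" and BV: "B \<subseteq> V" using AB by auto
  have finA: "finite A" and finB: "finite B" using fin AB(1) by auto
  have "card A \<le> card B" using count_le[OF sg cub AV BV] b1 by blast
  moreover have "card B \<le> card A" using count_le[OF sg cub BV AV] b2 by blast
  ultimately have cAB: "card A = card B" by simp
  define m where "m = card A"
  have cV: "card V = 2 * m" using AB cAB finA finB card_Un_disjoint[of A B] m_def by simp
  have m6: "m \<le> 6" using cV assms(5) by simp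
  have alpha: "card S \<le> m" if ind: "independent_set V E S" for S
  proof -
    have SV: "S \<subseteq> V" and Sind: "\<And>x y. x \<in> S \<Longrightarrow> y \<in> S \<Longrightarrow> \<not> E x y"
      using ind by (auto simp: independent_set_def)
    have "card (S \<inter> A) \<le> card (B - S)"
    proof (rule count_le[OF sg cub])
      show "S \<inter> A \<subseteq> V" "B - S \<subseteq> V" using SV BV by auto
      fix x y assume "x \<in> S \<inter> A" "E x y"
      then show "y \<in> B - S" using b1 Sind by blast
    qed
    moreover have "card (B - S) = card B - card (B \<inter> S)"
      using finB by (metis card_Diff_subset_Int Int_commute finite_Int)
    moreover have "card S = card (S \<inter> A) + card (S \<inter> B)"
    proof -
      have "S = (S \<inter> A) \<union> (S \<inter> B)" using SV AB by blast
      moreover have "(S \<inter> A) \<inter> (S \<inter> B) = {}" using AB by blast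
      ultimately show ?thesis using finA finB card_Un_disjoint
        by (metis finite_Int)
    qed
    moreover have "card (B \<inter> S) \<le> card B" using finB by (simp add: card_mono)
    ultimately show ?thesis unfolding m_def using cAB by (simp add: Int_commute)
  qed
  have up: "dom_can_force V E m {}"
    using phase1[OF sg cub AB bip Vne m_def[symmetric] _ m6 alpha, of "{}" m] cAB m_def
    by (simp add: independent_set_def)
  have low: "m \<le> k" if "dom_can_force V E k {}" for k
    using lower[OF sg cub AB bip, of "{}" k] that m_def by simp
  have idn: "indicated_domination_number V E = m"
    unfolding indicated_domination_number_def
    by (rule Least_equality) (use up low in auto)
  have Aind: "independent_set V E A"
    using AV b1 AB(2) unfolding independent_set_def by blast
  have finS: "finite (card ` {S. independent_set V E S})"
  proof -
    have "{S. independent_set V E S} \<subseteq> Pow V" by (auto simp: independent_set_def)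
    then have "finite {S. independent_set V E S}" using fin finite_subset by blast
    then show ?thesis by simp
  qed
  have inn: "independence_number V E = m"
    unfolding independence_number_def
  proof (rule Max_eqI[OF finS])
    show "\<And>y. y \<in> card ` {S. independent_set V E S} \<Longrightarrow> y \<le> m" using alpha by auto
    show "m \<in> card ` {S. independent_set V E S}" using Aind m_def by blast
  qed
  show ?thesis using idn inn cV by simp
qed

end
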